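(* Let $p,q\in(0,\infty]$ with $\min\{p,q\}<\infty$. Then the embedding operator $I\colon\ell^{p,q}\to c_0$ is maximally non-compact, i.e. $\alpha(I)=\|I\|$.
   Context: For a scalar sequence $a=(a_n)$, its decreasing rearrangement is $a^*_n=\inf\{\omega>0:\#\{k:|a_k|>\omega\}\le n-1\}$. For $p,q\in(0,\infty]$, the Lorentz sequence space $\ell^{p,q}$ consists of all sequences $a$ with $\|a\|_{p,q}<\infty$, where $\|a\|_{p,q}=\big(\sum_{n=1}^\infty (a_n^* )^q n^{q/p-1}\big)^{1/q}$ if $q<\infty$, and $\|a\|_{p,\infty}=\sup_{n}n^{1/p}a_n^*$; convention $1/\infty=0$. $c_0$ is the space of sequences converging to $0$ with the sup norm. For a bounded map $T\colon X\to Y$ with closed unit balls $B_X,B_Y$, the ball measure of non-compactness is $\alpha(T)=\inf\{r>0:\ T(B_X)\subset\bigcup_{i=1}^m (y_i+rB_Y)\text{ for some } m\in\mathbb{N},\ y_i\in Y\}$, $\|T\|=\sup_{x\in B_X}\|Tx\|$, and $T$ is maximally non-compact if $\alpha(T)=\|T\|$. *)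

theory Defs
  imports "HOL-Analysis.Analysis"
begin

text \<open>Scalar sequences are real sequences indexed from 0; the paper's index n \<ge> 1
  corresponds to position n - 1. Exponents p, q range over (0, \<infinity>] as ennreal.\<close>

text \<open>Positive power of an extended nonnegative real (only used with exponent r > 0).\<close>
definition epow :: "ennreal \<Rightarrow> real \<Rightarrow> ennreal" where
  "epow x r = (if x = \<infinity> then (if r > 0 then \<infinity> else if r = 0 then 1 else 0)
               else ennreal (enn2real x powr r))"

definition einv :: "ennreal \<Rightarrow> real" where
  "einv p = (if p = \<infinity> then 0 else 1 / enn2real p)"

text \<open>Decreasing rearrangement a*_n for n \<ge> 1 (value in [0,\<infinity>]; inf of the empty set is \<infinity>).
  #{k. |a_k| > w} \<le> n-1 requires in particular that this set is finite.\<close>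
definition drear :: "(nat \<Rightarrow> real) \<Rightarrow> nat \<Rightarrow> ennreal" where
  "drear a n = Inf {w::ennreal. w > 0 \<and> finite {k. ennreal \<bar>a k\<bar> > w}
                    \<and> card {k. ennreal \<bar>a k\<bar> > w} \<le> n - 1}"

definition lorentz_norm :: "ennreal \<Rightarrow> ennreal \<Rightarrow> (nat \<Rightarrow> real) \<Rightarrow> ennreal" where
  "lorentz_norm p q a =
     (if q = \<infinity> then (SUP n\<in>{1::nat..}. ennreal (real n powr einv p) * drear a n)
      else epow (\<Sum>n. epow (drear a (Suc n)) (enn2real q)
                        * ennreal (real (Suc n) powr (enn2real q * einv p - 1)))
                (1 / enn2real q))"

definition lorentz_space :: "ennreal \<Rightarrow> ennreal \<Rightarrow> (nat \<Rightarrow> real) set" where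
  "lorentz_space p q = {a. lorentz_norm p q a < \<infinity>}"

definition lorentz_ball :: "ennreal \<Rightarrow> ennreal \<Rightarrow> (nat \<Rightarrow> real) set" where
  "lorentz_ball p q = {a. lorentz_norm p q a \<le> 1}"

definition c0 :: "(nat \<Rightarrow> real) set" where
  "c0 = {a. a \<longlonglongrightarrow> 0}"

definition sup_norm :: "(nat \<Rightarrow> real) \<Rightarrow> ennreal" where
  "sup_norm a = (SUP n. ennreal \<bar>a n\<bar>)"

text \<open>Operator norm of a map T from the unit ball BX into c0 (sup norm).\<close>
definition op_norm :: "(nat \<Rightarrow> real) set \<Rightarrow> ((nat \<Rightarrow> real) \<Rightarrow> (nat \<Rightarrow> real)) \<Rightarrow> ennreal" where
  "op_norm BX T = (SUP x\<in>BX. sup_norm (T x))"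

text \<open>Ball measure of non-compactness of T with domain unit ball BX, target c0.\<close>
definition ball_mnc :: "(nat \<Rightarrow> real) set \<Rightarrow> ((nat \<Rightarrow> real) \<Rightarrow> (nat \<Rightarrow> real)) \<Rightarrow> ennreal" where
  "ball_mnc BX T = Inf {ennreal r | r. r > 0 \<and>
     (\<exists>Y. finite Y \<and> Y \<noteq> {} \<and> Y \<subseteq> c0 \<and>
        T ` BX \<subseteq> (\<Union>y\<in>Y. {(\<lambda>n. y n + z n) | z. z \<in> c0 \<and> sup_norm z \<le> ennreal r}))}"

end

theory Submission
  imports Defs
begin

lemma epow_mono: "r > 0 \<Longrightarrow> x \<le> y \<Longrightarrow> epow x r \<le> epow y r"
  unfolding epow_def
  by (cases "y = \<infinity>") (auto intro!: ennreal_leI powr_mono2 enn2real_mono simp: top.extremum_unique less_top)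

lemma epow_inv: "r > 0 \<Longrightarrow> epow (epow x r) (1/r) = x"
proof (cases "x = \<infinity>")
  case True
  assume "r > 0" then show ?thesis using True by (simp add: epow_def)
next
  case False
  assume r: "r > 0"
  have "(enn2real x powr r) powr (1/r) = enn2real x"
  proof -
    have "(enn2real x powr r) powr (1/r) = enn2real x powr (r * (1/r))" by (rule powr_powr)
    also have "\<dots> = enn2real x powr 1" using r by simp
    also have "\<dots> = enn2real x" by (simp add: powr_one enn2real_nonneg)
    finally show ?thesis .
  qed
  then show ?thesis using False r by (simp add: epow_def ennreal_enn2real_if)
qed

lemma epow_zero: "r > 0 \<Longrightarrow> epow 0 r = 0"
  by (simp add: epow_def)

lemma epow_one: "epow 1 r = 1"
  by (simp add: epow_def)

lemma einv_nonneg: "einv p \<ge> 0"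
  by (simp add: einv_def)

lemma sup_le_drear1: "sup_norm a \<le> drear a 1"
  unfolding drear_def sup_norm_def
proof (rule Inf_greatest)
  fix w assume "w \<in> {w::ennreal. w > 0 \<and> finite {k. ennreal \<bar>a k\<bar> > w} \<and> card {k. ennreal \<bar>a k\<bar> > w} \<le> 1 - 1}"
  then have "{k. ennreal \<bar>a k\<bar> > w} = {}" by auto
  then show "(SUP n. ennreal \<bar>a n\<bar>) \<le> w" by (auto intro!: SUP_least simp: not_less)
qed

lemma drear1_le_norm:
  assumes "q > 0"
  shows "drear a 1 \<le> lorentz_norm p q a"
proof (cases "q = \<infinity>")
  case True
  have "ennreal (real 1 powr einv p) * drear a 1 \<le> (SUP n\<in>{1::nat..}. ennreal (real n powr einv p) * drear a n)"
    by (rule SUP_upper) auto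
  then show ?thesis using True by (simp add: lorentz_norm_def)
next
  case False
  define r where "r = enn2real q"
  have r: "r > 0" using assms False by (simp add: r_def enn2real_positive_iff less_top)
  let ?f = "\<lambda>n. epow (drear a (Suc n)) (enn2real q) * ennreal (real (Suc n) powr (enn2real q * einv p - 1))"
  have "?f 0 \<le> (\<Sum>n. ?f n)"
    using sum_le_suminf[OF summableI, of "{0}" ?f] by simp
  then have "epow (drear a 1) r \<le> (\<Sum>n. ?f n)" by (simp add: r_def)
  then have "epow (epow (drear a 1) r) (1/r) \<le> epow (\<Sum>n. ?f n) (1/r)"
    using r by (intro epow_mono) auto
  then show ?thesis using False r by (simp add: lorentz_norm_def epow_inv r_def)
qed

lemma sup_le_norm: "q > 0 \<Longrightarrow> sup_norm a \<le> lorentz_norm p q a"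
  using sup_le_drear1 drear1_le_norm order_trans by blast

definition unitv :: "nat \<Rightarrow> nat \<Rightarrow> real" where
  "unitv k = (\<lambda>n. if n = k then 1 else 0)"

lemma drear_unit1: "drear (unitv k) 1 \<le> 1"
  unfolding drear_def
  by (rule Inf_lower) (auto simp: unitv_def)

lemma drear_unit2:
  assumes "n \<ge> 2" shows "drear (unitv k) n = 0"
proof -
  have "{w::ennreal. w > 0 \<and> finite {j. ennreal \<bar>unitv k j\<bar> > w}
                    \<and> card {j. ennreal \<bar>unitv k j\<bar> > w} \<le> n - 1} = {0<..}"
  proof (intro set_eqI iffI)
    fix w :: ennreal assume "w \<in> {0<..}"
    have sub: "{j. ennreal \<bar>unitv k j\<bar> > w} \<subseteq> {k}"
      using \<open>w \<in> {0<..}\<close> by (auto simp: unitv_def)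
    have "card {j. ennreal \<bar>unitv k j\<bar> > w} \<le> card {k}"
      by (rule card_mono) (simp_all add: sub)
    then have "card {j. ennreal \<bar>unitv k j\<bar> > w} \<le> 1" by simp
    then show "w \<in> {w::ennreal. w > 0 \<and> finite {j. ennreal \<bar>unitv k j\<bar> > w}
                    \<and> card {j. ennreal \<bar>unitv k j\<bar> > w} \<le> n - 1}"
      using \<open>w \<in> {0<..}\<close> finite_subset[OF sub] assms by simp
  qed auto
  then show ?thesis unfolding drear_def by simp
qed

lemma norm_unit_le:
  assumes "q > 0" shows "lorentz_norm p q (unitv k) \<le> 1"
proof (cases "q = \<infinity>")
  case True
  have "ennreal (real n powr einv p) * drear (unitv k) n \<le> 1" if "n \<ge> 1" for n :: nat
  proof (cases "n = 1")
    case True then show ?thesis using drear_unit1 by simp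
  next
    case False then show ?thesis using that drear_unit2[of n] by simp
  qed
  then have "(SUP n\<in>{1::nat..}. ennreal (real n powr einv p) * drear (unitv k) n) \<le> 1"
    by (intro SUP_least) simp
  then show ?thesis using True by (simp add: lorentz_norm_def)
next
  case False
  define r where "r = enn2real q"
  have r: "r > 0" using assms False by (simp add: r_def enn2real_positive_iff less_top)
  let ?f = "\<lambda>n. epow (drear (unitv k) (Suc n)) (enn2real q) * ennreal (real (Suc n) powr (enn2real q * einv p - 1))"
  have z: "?f n = 0" if "n \<notin> {0}" for n
    using that drear_unit2[of "Suc n" k] r by (simp add: epow_zero r_def)
  have "(\<Sum>n. ?f n) = sum ?f {0}"
    by (rule suminf_finite) (use z in auto)
  also have "\<dots> = epow (drear (unitv k) 1) r" by (simp add: r_def)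
  also have "\<dots> \<le> epow 1 r" using r drear_unit1 by (intro epow_mono) auto
  finally have "(\<Sum>n. ?f n) \<le> 1" by (simp add: epow_one)
  then have "epow (\<Sum>n. ?f n) (1/r) \<le> epow 1 (1/r)" using r by (intro epow_mono) auto
  then show ?thesis using False by (simp add: lorentz_norm_def epow_one r_def)
qed

lemma drear_ge:
  assumes "infinite {k. \<bar>a k\<bar> \<ge> e}"
  shows "ennreal e \<le> drear a n"
  unfolding drear_def
proof (rule Inf_greatest)
  fix w assume w: "w \<in> {w::ennreal. w > 0 \<and> finite {k. ennreal \<bar>a k\<bar> > w} \<and> card {k. ennreal \<bar>a k\<bar> > w} \<le> n - 1}"
  show "ennreal e \<le> w"
  proof (rule ccontr)
    assume "\<not> ennreal e \<le> w"
    then have "w < ennreal e" by simp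
    then have "{k. \<bar>a k\<bar> \<ge> e} \<subseteq> {k. ennreal \<bar>a k\<bar> > w}"
      using ennreal_leI order.strict_trans2 by blast
    then show False using w assms finite_subset by auto
  qed
qed

lemma norm_finite_c0:
  assumes p: "p > 0" and q: "q > 0" and pq: "p \<noteq> \<infinity> \<or> q \<noteq> \<infinity>"
    and fin: "lorentz_norm p q a < \<infinity>"
  shows "a \<longlonglongrightarrow> 0"
proof (rule ccontr)
  assume "\<not> a \<longlonglongrightarrow> 0"
  then obtain e where e: "e > 0" and fr: "\<forall>N. \<exists>n\<ge>N. \<bar>a n\<bar> \<ge> e"
    unfolding LIMSEQ_iff by (auto simp: not_less)
  have inf: "infinite {k. \<bar>a k\<bar> \<ge> e}"
    using fr by (simp add: infinite_nat_iff_unbounded_le)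
  have dr: "ennreal e \<le> drear a n" for n using drear_ge[OF inf] .
  show False
  proof (cases "q = \<infinity>")
    case True
    then have pf: "p \<noteq> \<infinity>" using pq by auto
    define s where "s = einv p"
    have s: "s > 0" using p pf by (simp add: s_def einv_def enn2real_positive_iff less_top)
    define B where "B = enn2real (lorentz_norm p q a)"
    have B: "lorentz_norm p q a = ennreal B" "B \<ge> 0" using fin by (auto simp: B_def ennreal_enn2real_if)
    have le: "real n powr s * e \<le> B" if "n \<ge> 1" for n :: nat
    proof -
      have "ennreal (real n powr s) * ennreal e \<le> ennreal (real n powr s) * drear a n"
        using dr by (intro mult_left_mono) auto
      also have "\<dots> \<le> lorentz_norm p q a"
        using True that by (simp add: lorentz_norm_def s_def) (rule SUP_upper, auto)
      finally show ?thesis using B e by (simp add: ennreal_mult''[symmetric] ennreal_le_iff)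
    qed
    have "filterlim (\<lambda>n. real n powr s) at_top sequentially"
      by (rule filterlim_compose[OF real_powr_at_top[OF s] filterlim_real_sequentially])
    then have "eventually (\<lambda>n. real n powr s > B / e) sequentially"
      by (simp add: filterlim_at_top_dense)
    moreover have "eventually (\<lambda>n. n \<ge> (1::nat)) sequentially" by (rule eventually_ge_at_top)
    ultimately have "eventually (\<lambda>n. real n powr s > B / e \<and> n \<ge> 1) sequentially"
      by (rule eventually_conj)
    then obtain N where N: "\<forall>n\<ge>N. real n powr s > B / e \<and> n \<ge> 1"
      by (auto simp: eventually_sequentially)
    then obtain n :: nat where "real n powr s > B / e" "n \<ge> 1" by blast
    then show False using le[of n] e by (simp add: field_simps)
  next
    case False
    define r where "r = enn2real q"
    have r: "r > 0" using q False by (simp add: r_def enn2real_positive_iff less_top)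
    let ?f = "\<lambda>n. epow (drear a (Suc n)) (enn2real q) * ennreal (real (Suc n) powr (enn2real q * einv p - 1))"
    define c where "c = e powr r"
    have c: "c > 0" using e by (simp add: c_def)
    have lower: "ennreal (c * inverse (real (Suc n))) \<le> ?f n" for n
    proof -
      have "ennreal c = epow (ennreal e) r" using e by (simp add: c_def epow_def)
      also have "\<dots> \<le> epow (drear a (Suc n)) r" using r dr by (intro epow_mono)
      finally have 1: "ennreal c \<le> epow (drear a (Suc n)) (enn2real q)" by (simp add: r_def)
      have "real (Suc n) powr (-1) \<le> real (Suc n) powr (enn2real q * einv p - 1)"
        using r einv_nonneg[of p] by (intro powr_mono) (auto simp: r_def)
      then have 2: "inverse (real (Suc n)) \<le> real (Suc n) powr (enn2real q * einv p - 1)"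
        by (simp add: powr_minus)
      have "ennreal (c * inverse (real (Suc n))) = ennreal c * ennreal (inverse (real (Suc n)))"
        using c by (simp add: ennreal_mult)
      also have "\<dots> \<le> ?f n" using 1 2 by (intro mult_mono) (auto intro: ennreal_leI)
      finally show ?thesis .
    qed
    have "(\<Sum>n. ennreal (c * inverse (real (Suc n)))) \<le> (\<Sum>n. ?f n)"
      by (intro suminf_le[OF _ summableI summableI] lower)
    moreover have "(\<Sum>n. ?f n) \<noteq> top"
    proof
      assume "(\<Sum>n. ?f n) = top"
      then have "lorentz_norm p q a = \<infinity>" using False r unfolding r_def by (simp add: lorentz_norm_def epow_def)
      then show False using fin by simp
    qed
    ultimately have "(\<Sum>n. ennreal (c * inverse (real (Suc n)))) \<noteq> top"
      using neq_top_trans by blast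
    then have "summable (\<lambda>n. c * inverse (real (Suc n)))"
      using c by (intro summable_suminf_not_top) auto
    then have "summable (\<lambda>n. inverse (real (Suc n)))"
      using c by (simp add: summable_cmult_iff)
    then have "summable (\<lambda>n. inverse (real n))"
      using summable_Suc_iff[of "\<lambda>n. inverse (real n)"] by simp
    then show False using not_summable_harmonic by auto
  qed
qed


lemma ball_mnc_ge:
  assumes unit: "\<And>k. unitv k \<in> BX"
  shows "1 \<le> ball_mnc BX id"
  unfolding ball_mnc_def
proof (rule Inf_greatest)
  fix x assume "x \<in> {ennreal r | r. r > 0 \<and>
     (\<exists>Y. finite Y \<and> Y \<noteq> {} \<and> Y \<subseteq> c0 \<and>
        id ` BX \<subseteq> (\<Union>y\<in>Y. {(\<lambda>n. y n + z n) | z. z \<in> c0 \<and> sup_norm z \<le> ennreal r}))}"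
  then obtain r Y where x: "x = ennreal r" and r: "r > 0" and Y: "finite Y" "Y \<subseteq> c0"
    and cov: "id ` BX \<subseteq> (\<Union>y\<in>Y. {(\<lambda>n. y n + z n) | z. z \<in> c0 \<and> sup_norm z \<le> ennreal r})"
    by blast
  show "1 \<le> x"
  proof (rule ccontr)
    assume "\<not> 1 \<le> x"
    then have r1: "r < 1" using x by (simp add: not_le ennreal_less_iff)
    have "\<forall>y\<in>Y. eventually (\<lambda>k. \<bar>y k\<bar> < 1 - r) sequentially"
    proof
      fix y assume "y \<in> Y"
      then have lim: "y \<longlonglongrightarrow> 0" using Y by (auto simp: c0_def)
      have "0 < 1 - r" using r1 by simp
      from LIMSEQ_D[OF lim this] obtain N where N: "\<forall>n\<ge>N. norm (y n - 0) < 1 - r" by blast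
      show "eventually (\<lambda>k. \<bar>y k\<bar> < 1 - r) sequentially"
        unfolding eventually_sequentially using N by (intro exI[of _ N]) simp
    qed
    then have "eventually (\<lambda>k. \<forall>y\<in>Y. \<bar>y k\<bar> < 1 - r) sequentially"
      using Y(1) by (simp add: eventually_ball_finite)
    then obtain k where k: "\<forall>y\<in>Y. \<bar>y k\<bar> < 1 - r"
      by (auto simp: eventually_sequentially)
    have "unitv k \<in> id ` BX" using unit by simp
    then obtain y z where y: "y \<in> Y" and z: "sup_norm z \<le> ennreal r"
      and eq: "unitv k = (\<lambda>n. y n + z n)"
      using cov by blast
    have "ennreal \<bar>z k\<bar> \<le> sup_norm z" unfolding sup_norm_def by (rule SUP_upper) simp
    then have "ennreal \<bar>z k\<bar> \<le> ennreal r" using z by simp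
    then have zk: "\<bar>z k\<bar> \<le> r" using r by (simp add: ennreal_le_iff)
    have "1 = y k + z k" using fun_cong[OF eq, of k] by (simp add: unitv_def)
    then show False using zk k y by auto
  qed
qed

theorem mainTheorem11:
  fixes p q :: ennreal
  assumes "p > 0" and "q > 0" and "p \<noteq> \<infinity> \<or> q \<noteq> \<infinity>"
  shows "lorentz_space p q \<subseteq> c0
         \<and> op_norm (lorentz_ball p q) id < \<infinity>
         \<and> ball_mnc (lorentz_ball p q) id = op_norm (lorentz_ball p q) id"
proof -
  have ball_c0: "x \<in> c0" if "x \<in> lorentz_ball p q" for x
  proof -
    have "lorentz_norm p q x \<le> 1" using that by (simp add: lorentz_ball_def)
    also have "(1::ennreal) < \<infinity>" by simp
    finally show ?thesis using norm_finite_c0[OF assms, of x] by (simp add: c0_def)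
  qed
  have ball_sup: "sup_norm x \<le> 1" if "x \<in> lorentz_ball p q" for x
    using sup_le_norm[OF assms(2), of x p] that by (auto simp: lorentz_ball_def)
  have unit: "unitv k \<in> lorentz_ball p q" for k
    using norm_unit_le[OF assms(2)] by (simp add: lorentz_ball_def)
  have op1: "op_norm (lorentz_ball p q) id = 1"
  proof (rule antisym)
    show "op_norm (lorentz_ball p q) id \<le> 1"
      unfolding op_norm_def by (rule SUP_least) (simp add: ball_sup)
    have "ennreal \<bar>unitv 0 0\<bar> \<le> sup_norm (unitv 0)" unfolding sup_norm_def by (rule SUP_upper) simp
    then have "1 \<le> sup_norm (id (unitv 0))" by (simp add: unitv_def)
    then show "1 \<le> op_norm (lorentz_ball p q) id"
      unfolding op_norm_def using unit[of 0] by (blast intro: SUP_upper2)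
  qed
  have space: "lorentz_space p q \<subseteq> c0"
    using norm_finite_c0[OF assms] by (auto simp: lorentz_space_def c0_def)
  have mnc_le: "ball_mnc (lorentz_ball p q) id \<le> 1"
  proof -
    have "ennreal 1 \<in> {ennreal r | r. r > 0 \<and>
     (\<exists>Y. finite Y \<and> Y \<noteq> {} \<and> Y \<subseteq> c0 \<and>
        id ` lorentz_ball p q \<subseteq> (\<Union>y\<in>Y. {(\<lambda>n. y n + z n) | z. z \<in> c0 \<and> sup_norm z \<le> ennreal r}))}"
    proof -
      have z0: "(\<lambda>n. 0::real) \<in> c0" by (simp add: c0_def)
      have sub: "id ` lorentz_ball p q \<subseteq> (\<Union>y\<in>{\<lambda>n. 0::real}. {(\<lambda>n. y n + z n) | z. z \<in> c0 \<and> sup_norm z \<le> ennreal 1})"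
      proof
        fix x assume "x \<in> id ` lorentz_ball p q"
        then have xb: "x \<in> lorentz_ball p q" by simp
        have e1: "x = (\<lambda>n. (\<lambda>n. 0::real) n + x n)" by simp
        have e2: "x \<in> c0" "sup_norm x \<le> ennreal 1" using ball_c0[OF xb] ball_sup[OF xb] by simp_all
        have "x \<in> {(\<lambda>n. (\<lambda>n. 0::real) n + z n) | z. z \<in> c0 \<and> sup_norm z \<le> ennreal 1}"
          by (rule CollectI, rule exI[of _ x], intro conjI e1 e2)
        then show "x \<in> (\<Union>y\<in>{\<lambda>n. 0::real}. {(\<lambda>n. y n + z n) | z. z \<in> c0 \<and> sup_norm z \<le> ennreal 1})"
          by (rule UN_I[of "\<lambda>n. 0::real" "{\<lambda>n. 0::real}" x "\<lambda>y. {(\<lambda>n. y n + z n) | z. z \<in> c0 \<and> sup_norm z \<le> ennreal 1}", OF singletonI])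
      qed
      have fY: "finite {\<lambda>n. 0::real}" "{\<lambda>n. 0::real} \<noteq> {}" "{\<lambda>n. 0::real} \<subseteq> c0"
        using z0 by simp_all
      have P1: "(1::real) > 0 \<and> (\<exists>Y. finite Y \<and> Y \<noteq> {} \<and> Y \<subseteq> c0 \<and>
        id ` lorentz_ball p q \<subseteq> (\<Union>y\<in>Y. {(\<lambda>n. y n + z n) | z. z \<in> c0 \<and> sup_norm z \<le> ennreal 1}))"
      proof (rule conjI)
        show "(1::real) > 0" by simp
        show "\<exists>Y. finite Y \<and> Y \<noteq> {} \<and> Y \<subseteq> c0 \<and>
        id ` lorentz_ball p q \<subseteq> (\<Union>y\<in>Y. {(\<lambda>n. y n + z n) | z. z \<in> c0 \<and> sup_norm z \<le> ennreal 1})"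
          by (rule exI[of _ "{\<lambda>n. 0::real}"]) (intro conjI fY(1) fY(2) fY(3) sub)
      qed
      show ?thesis by (rule CollectI, rule exI[of _ 1], rule conjI[OF refl P1])
    qed
    then have "Inf {ennreal r | r. r > 0 \<and>
     (\<exists>Y. finite Y \<and> Y \<noteq> {} \<and> Y \<subseteq> c0 \<and>
        id ` lorentz_ball p q \<subseteq> (\<Union>y\<in>Y. {(\<lambda>n. y n + z n) | z. z \<in> c0 \<and> sup_norm z \<le> ennreal r}))} \<le> ennreal 1"
      by (rule Inf_lower)
    then show ?thesis unfolding ball_mnc_def by simp
  qed
  have "ball_mnc (lorentz_ball p q) id = 1"
    using mnc_le ball_mnc_ge[OF unit] by (rule antisym)
  then show ?thesis using op1 space by simp
qed

end
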